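(* Let $\mathbb{A}=(A,\backslash,/)$ be a residuation algebra that has no zero-divisors and satisfies $a\backslash(b\vee c)\leq(a\backslash b)\vee(a\backslash c)$ for all $a,b,c\in A$. Then the dual structure $\mathbb{A}^\delta_+$ is total, i.e. $y\cdot z\in J^\infty(A^\delta)$ for all $y,z\in J^\infty(A^\delta)$.
   Context: A residuation algebra is a structure $(A,\backslash,/)$ where $A$ is a bounded distributive lattice and $\backslash,/$ are binary operations on $A$ such that $\backslash$ preserves finite (including empty) meets in its second coordinate, $/$ preserves finite (including empty) meets in its first coordinate, and for all $a,b,c\in A$: $b\leq a\backslash c$ iff $a\leq c/b$. The canonical extension $A^\delta$ of $A$ is the complete lattice containing $A$ as a sublattice that is dense (every element is a join of meets and a meet of joins of elements of $A$) and compact (if $\bigwedge S\leq\bigvee T$ for $S,T\subseteq A$ then this holds for some finite subsets). Let $K(A^\delta)$ (resp. $O(A^\delta)$) be the set of meets (resp. joins) of subsets of $A$. The $\pi$-extension of $\backslash$ is: for $k\in K(A^\delta)$, $o\in O(A^\delta)$, $k\backslash^\pi o=\bigvee\{a\backslash b\mid a,b\in A,\ k\leq a,\ b\leq o\}$, and for arbitrary $u,v$, $u\backslash^\pi v=\bigwedge\{k\backslash^\pi o\mid k\in K(A^\delta), o\in O(A^\delta), k\leq u, v\leq o\}$; $/^\pi$ is defined symmetrically. There is a binary operation $\cdot$ on $A^\delta$ such that for all $u,v,w\in A^\delta$: $v\leq u\backslash^\pi w$ iff $u\cdot v\leq w$ iff $u\leq w/^\pi v$. $J^\infty(A^\delta)$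 is the set of completely join-irreducible elements of $A^\delta$. The dual structure $\mathbb{A}^\delta_+$ is $(J^\infty(A^\delta),\geq,R)$ with $R(x,y,z)$ iff $x\leq y\cdot z$; it is total if $y\cdot z\in J^\infty(A^\delta)$ for all $y,z\in J^\infty(A^\delta)$. $\mathbb{A}$ has no zero-divisors if $x\cdot y\neq\bot$ for all $x,y\in J^\infty(A^\delta)$. *)

theory Defs
  imports Main
begin

definition residuation_algebra ::
  "('a::{distrib_lattice,bounded_lattice} \<Rightarrow> 'a \<Rightarrow> 'a) \<Rightarrow> ('a \<Rightarrow> 'a \<Rightarrow> 'a) \<Rightarrow> bool" where
  "residuation_algebra ldiv rdiv \<longleftrightarrow>
     (\<forall>a. ldiv a top = top) \<and>
     (\<forall>a b c. ldiv a (inf b c) = inf (ldiv a b) (ldiv a c)) \<and>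
     (\<forall>a. rdiv top a = top) \<and>
     (\<forall>a b c. rdiv (inf b c) a = inf (rdiv b a) (rdiv c a)) \<and>
     (\<forall>a b c. b \<le> ldiv a c \<longleftrightarrow> a \<le> rdiv c b)"

definition closed_elems :: "('a \<Rightarrow> 'c::complete_lattice) \<Rightarrow> 'c set" where
  "closed_elems e = {Inf (e ` S) | S. True}"

definition open_elems :: "('a \<Rightarrow> 'c::complete_lattice) \<Rightarrow> 'c set" where
  "open_elems e = {Sup (e ` S) | S. True}"

text \<open>e embeds the bounded lattice A as a bounded sublattice of the complete lattice C,
  densely and compactly: C is (up to isomorphism) the canonical extension of A.\<close>
definition canonical_extension ::
  "('a::{distrib_lattice,bounded_lattice} \<Rightarrow> 'c::complete_lattice) \<Rightarrow> bool" where
  "canonical_extension e \<longleftrightarrow>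
     inj e \<and>
     (\<forall>a b. e (inf a b) = inf (e a) (e b)) \<and>
     (\<forall>a b. e (sup a b) = sup (e a) (e b)) \<and>
     e bot = bot \<and> e top = top \<and>
     (\<forall>u. (\<exists>X \<subseteq> closed_elems e. u = Sup X) \<and> (\<exists>Y \<subseteq> open_elems e. u = Inf Y)) \<and>
     (\<forall>S T. Inf (e ` S) \<le> Sup (e ` T) \<longrightarrow>
        (\<exists>S' T'. finite S' \<and> S' \<subseteq> S \<and> finite T' \<and> T' \<subseteq> T \<and> Inf (e ` S') \<le> Sup (e ` T')))"

definition ldiv_KO ::
  "('a \<Rightarrow> 'c::complete_lattice) \<Rightarrow> ('a \<Rightarrow> 'a \<Rightarrow> 'a) \<Rightarrow> 'c \<Rightarrow> 'c \<Rightarrow> 'c" where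
  "ldiv_KO e ldiv k p = Sup {e (ldiv a b) | a b. k \<le> e a \<and> e b \<le> p}"

definition ldiv_pi ::
  "('a \<Rightarrow> 'c::complete_lattice) \<Rightarrow> ('a \<Rightarrow> 'a \<Rightarrow> 'a) \<Rightarrow> 'c \<Rightarrow> 'c \<Rightarrow> 'c" where
  "ldiv_pi e ldiv u v = Inf {ldiv_KO e ldiv k p | k p.
      k \<in> closed_elems e \<and> p \<in> open_elems e \<and> k \<le> u \<and> v \<le> p}"

definition rdiv_OK ::
  "('a \<Rightarrow> 'c::complete_lattice) \<Rightarrow> ('a \<Rightarrow> 'a \<Rightarrow> 'a) \<Rightarrow> 'c \<Rightarrow> 'c \<Rightarrow> 'c" where
  "rdiv_OK e rdiv p k = Sup {e (rdiv b a) | a b. k \<le> e a \<and> e b \<le> p}"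

definition rdiv_pi ::
  "('a \<Rightarrow> 'c::complete_lattice) \<Rightarrow> ('a \<Rightarrow> 'a \<Rightarrow> 'a) \<Rightarrow> 'c \<Rightarrow> 'c \<Rightarrow> 'c" where
  "rdiv_pi e rdiv u v = Inf {rdiv_OK e rdiv p k | p k.
      p \<in> open_elems e \<and> k \<in> closed_elems e \<and> u \<le> p \<and> k \<le> v}"

text \<open>x is completely join-irreducible iff whenever x is the join of a set S, x belongs to S
  (this excludes bot = Sup {}).\<close>
definition compl_join_irred :: "'c::complete_lattice \<Rightarrow> bool" where
  "compl_join_irred x \<longleftrightarrow> (\<forall>S. x = Sup S \<longrightarrow> x \<in> S)"

end

theory Submission
  imports Defs
begin

lemma ce_mono: "canonical_extension e \<Longrightarrow> a \<le> b \<Longrightarrow> e a \<le> e b"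
proof -
  assume ce: "canonical_extension e" and ab: "a \<le> b"
  have "e (sup a b) = sup (e a) (e b)" using ce unfolding canonical_extension_def by blast
  moreover have "sup a b = b" using ab by (simp add: sup.absorb2)
  ultimately show ?thesis by (metis sup.cobounded1)
qed

lemma ce_refl: "canonical_extension e \<Longrightarrow> e a \<le> e b \<Longrightarrow> a \<le> b"
proof -
  assume ce: "canonical_extension e" and ab: "e a \<le> e b"
  have "e (inf a b) = inf (e a) (e b)" "inj e" using ce unfolding canonical_extension_def by blast+
  then have "e (inf a b) = e a" using ab by (simp add: inf.absorb1)
  then have "inf a b = a" using \<open>inj e\<close> by (meson injD)
  then show ?thesis by (metis inf.cobounded2)
qed

lemma fin_join: assumes ce: "canonical_extension e" shows "finite T \<Longrightarrow> \<exists>c. e c = Sup (e ` T)"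
proof (induction T rule: finite_induct)
  case empty
  then show ?case using ce unfolding canonical_extension_def by auto
next
  case (insert x F)
  then obtain c where "e c = Sup (e ` F)" by blast
  moreover have "e (sup x c) = sup (e x) (e c)" using ce unfolding canonical_extension_def by blast
  ultimately show ?case by auto
qed

lemma fin_meet: assumes ce: "canonical_extension e" shows "finite T \<Longrightarrow> \<exists>c. e c = Inf (e ` T)"
proof (induction T rule: finite_induct)
  case empty
  then show ?case using ce unfolding canonical_extension_def by auto
next
  case (insert x F)
  then obtain c where "e c = Inf (e ` F)" by blast
  moreover have "e (inf x c) = inf (e x) (e c)" using ce unfolding canonical_extension_def by blast
  ultimately show ?case by auto
qed

lemma cji_closed: "canonical_extension e \<Longrightarrow> compl_join_irred x \<Longrightarrow> x \<in> closed_elems e"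
proof -
  assume ce: "canonical_extension e" and x: "compl_join_irred x"
  obtain X where "X \<subseteq> closed_elems e" "x = Sup X" using ce unfolding canonical_extension_def by blast
  then show ?thesis using x unfolding compl_join_irred_def by blast
qed

lemma cji_nonbot: "compl_join_irred x \<Longrightarrow> \<not> x \<le> bot"
  unfolding compl_join_irred_def by (metis Sup_empty bot.extremum_uniqueI empty_iff)

lemma compact_closed:
  assumes ce: "canonical_extension e" and x: "x \<in> closed_elems e" and le: "x \<le> Sup (e ` T)"
  shows "\<exists>T'. finite T' \<and> T' \<subseteq> T \<and> x \<le> Sup (e ` T')"
proof -
  obtain X where X: "x = Inf (e ` X)" using x unfolding closed_elems_def by blast
  then obtain S' T' where "finite S'" "S' \<subseteq> X" "finite T'" "T' \<subseteq> T" "Inf (e ` S') \<le> Sup (e ` T')"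
    using ce le unfolding canonical_extension_def by metis
  moreover have "x \<le> Inf (e ` S')" using X \<open>S' \<subseteq> X\<close> by (simp add: Inf_superset_mono image_mono)
  ultimately show ?thesis by (meson order_trans)
qed

lemma distrib_helper:
  assumes ce: "canonical_extension e" and X: "x = Inf (e ` X)" and le: "inf x (e a) \<le> Sup (e ` T)"
  shows "\<exists>a1 t1. x \<le> e a1 \<and> inf a1 a \<le> t1 \<and> e t1 \<le> Sup (e ` T)"
proof -
  have "Inf (e ` insert a X) = inf x (e a)" using X by (simp add: inf_commute)
  then have "Inf (e ` insert a X) \<le> Sup (e ` T)" using le by simp
  then obtain S1 T1 where S1: "finite S1" "S1 \<subseteq> insert a X" "finite T1" "T1 \<subseteq> T" "Inf (e ` S1) \<le> Sup (e ` T1)"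
    using ce unfolding canonical_extension_def by metis
  obtain a1 where a1: "e a1 = Inf (e ` (S1 - {a}))" using fin_meet[OF ce] S1 by blast
  obtain t1 where t1: "e t1 = Sup (e ` T1)" using fin_join[OF ce] S1 by blast
  have "S1 - {a} \<subseteq> X" using S1(2) by blast
  then have "x \<le> e a1" using X a1 by (simp add: Inf_superset_mono image_mono)
  moreover have "inf (e a1) (e a) \<le> Inf (e ` S1)"
  proof -
    have "Inf (e ` insert a (S1 - {a})) \<le> Inf (e ` S1)" by (rule Inf_superset_mono) auto
    moreover have "Inf (e ` insert a (S1 - {a})) = inf (e a1) (e a)" unfolding a1 by (simp only: image_insert Inf_insert inf_commute)
    ultimately show ?thesis by metis
  qed
  then have "e (inf a1 a) \<le> e t1" using ce S1(5) t1 unfolding canonical_extension_def by (metis order_trans)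
  then have "inf a1 a \<le> t1" using ce_refl[OF ce] by blast
  moreover have "e t1 \<le> Sup (e ` T)" using t1 S1(4) by (simp add: Sup_subset_mono image_mono)
  ultimately show ?thesis by blast
qed

lemma distrib_closed:
  assumes ce: "canonical_extension e" and X: "x = Inf (e ` X)" and le: "x \<le> sup (e a) (e b)"
  shows "x \<le> sup (inf x (e a)) (inf x (e b))"
proof -
  let ?u = "sup (inf x (e a)) (inf x (e b))"
  obtain Y where Y: "Y \<subseteq> open_elems e" "?u = Inf Y" using ce unfolding canonical_extension_def by blast
  have "x \<le> Inf Y"
  proof (rule Inf_greatest)
    fix p assume "p \<in> Y"
    then obtain T where T: "p = Sup (e ` T)" using Y unfolding open_elems_def by blast
    have up: "?u \<le> p" using Y \<open>p \<in> Y\<close> by (metis Inf_lower)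
    then have "inf x (e a) \<le> Sup (e ` T)" using T by (metis le_supE)
    then obtain a1 t1 where A: "x \<le> e a1" "inf a1 a \<le> t1" "e t1 \<le> p" using distrib_helper[OF ce X] T by blast
    have "inf x (e b) \<le> Sup (e ` T)" using T up by (metis le_supE)
    then obtain a2 t2 where B: "x \<le> e a2" "inf a2 b \<le> t2" "e t2 \<le> p" using distrib_helper[OF ce X] T by blast
    have "inf (inf a1 a2) (sup a b) \<le> sup t1 t2"
    proof -
      have "inf (inf a1 a2) (sup a b) = sup (inf (inf a1 a2) a) (inf (inf a1 a2) b)"
        by (simp add: inf_sup_distrib1)
      also have "\<dots> \<le> sup (inf a1 a) (inf a2 b)"
        by (meson inf_le1 inf_le2 inf_mono order_refl sup_mono)
      also have "\<dots> \<le> sup t1 t2" using A B by (simp add: sup.coboundedI1 sup.coboundedI2)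
      finally show ?thesis .
    qed
    then have "e (inf (inf a1 a2) (sup a b)) \<le> e (sup t1 t2)" using ce_mono[OF ce] by blast
    moreover have "e (inf (inf a1 a2) (sup a b)) = inf (inf (e a1) (e a2)) (sup (e a) (e b))"
      "e (sup t1 t2) = sup (e t1) (e t2)" using ce unfolding canonical_extension_def by auto
    moreover have "x \<le> inf (inf (e a1) (e a2)) (sup (e a) (e b))" using A B le by simp
    ultimately show "x \<le> p" using A B by (metis le_sup_iff order_trans)
  qed
  then show ?thesis using Y by simp
qed

lemma prime2:
  assumes ce: "canonical_extension e" and x: "compl_join_irred x" and le: "x \<le> sup (e a) (e b)"
  shows "x \<le> e a \<or> x \<le> e b"
proof -
  obtain X where X: "x = Inf (e ` X)" using cji_closed[OF ce x] unfolding closed_elems_def by blast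
  have "x \<le> sup (inf x (e a)) (inf x (e b))" using distrib_closed[OF ce X le] .
  then have "x = Sup {inf x (e a), inf x (e b)}" by (simp add: antisym)
  then have "x \<in> {inf x (e a), inf x (e b)}" using x unfolding compl_join_irred_def by blast
  then show ?thesis by (metis inf.absorb_iff1 insert_iff singletonD)
qed

lemma prime_fin:
  assumes ce: "canonical_extension e" and x: "compl_join_irred x"
  shows "finite T \<Longrightarrow> x \<le> Sup (e ` T) \<Longrightarrow> \<exists>t\<in>T. x \<le> e t"
proof (induction T rule: finite_induct)
  case empty
  then show ?case using cji_nonbot[OF x] by simp
next
  case (insert t F)
  obtain c where c: "e c = Sup (e ` F)" using fin_join[OF ce insert(1)] by blast
  have "x \<le> sup (e t) (e c)" using insert(4) c by simp
  then have "x \<le> e t \<or> x \<le> e c" using prime2[OF ce x] by blast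
  then show ?case using insert c by auto
qed

lemma prime_compact:
  assumes ce: "canonical_extension e" and x: "compl_join_irred x" and le: "x \<le> Sup (e ` T)"
  shows "\<exists>t\<in>T. x \<le> e t"
  using compact_closed[OF ce cji_closed[OF ce x] le] prime_fin[OF ce x] by blast

lemma ldiv_mono:
  assumes ra: "residuation_algebra ldiv rdiv" and bc: "b \<le> c"
  shows "ldiv a b \<le> ldiv a c"
proof -
  have "ldiv a b = ldiv a (inf b c)" using bc by (simp add: inf.absorb1)
  also have "\<dots> = inf (ldiv a b) (ldiv a c)" using ra unfolding residuation_algebra_def by blast
  finally show ?thesis by (metis inf.cobounded2)
qed

lemma ldiv_fin:
  assumes ce: "canonical_extension e" and ra: "residuation_algebra ldiv rdiv"
    and distr: "\<And>a b c. ldiv a (sup b c) \<le> sup (ldiv a b) (ldiv a c)"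
  shows "finite U \<Longrightarrow> e c \<le> Sup (e ` U) \<Longrightarrow>
     e (ldiv a c) \<le> sup (Sup ((\<lambda>b. e (ldiv a b)) ` U)) (e (ldiv a bot))"
proof (induction U arbitrary: c rule: finite_induct)
  case empty
  then have "e c \<le> e bot" using ce unfolding canonical_extension_def by simp
  then have "c \<le> bot" using ce_refl[OF ce] by blast
  then have "c = bot" by (simp add: bot_unique)
  then show ?case by simp
next
  case (insert b F)
  have esup: "\<And>x y. e (sup x y) = sup (e x) (e y)" using ce unfolding canonical_extension_def by blast
  obtain d where d: "e d = Sup (e ` F)" using fin_join[OF ce insert(1)] by blast
  have "Sup (e ` insert b F) = e (sup b d)" by (simp only: image_insert Sup_insert d esup)
  then have "e c \<le> e (sup b d)" using insert(4) by simp
  then have "c \<le> sup b d" using ce_refl[OF ce] by blast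
  then have "ldiv a c \<le> ldiv a (sup b d)" by (rule ldiv_mono[OF ra])
  also have "\<dots> \<le> sup (ldiv a b) (ldiv a d)" by (rule distr)
  finally have "e (ldiv a c) \<le> e (sup (ldiv a b) (ldiv a d))" by (rule ce_mono[OF ce])
  then have 1: "e (ldiv a c) \<le> sup (e (ldiv a b)) (e (ldiv a d))" by (simp only: esup)
  have 2: "e (ldiv a d) \<le> sup (Sup ((\<lambda>b. e (ldiv a b)) ` F)) (e (ldiv a bot))"
    by (rule insert(3)) (simp add: d)
  have 3: "e (ldiv a b) \<le> Sup ((\<lambda>b. e (ldiv a b)) ` insert b F)" by (rule Sup_upper) simp
  have 4: "Sup ((\<lambda>b. e (ldiv a b)) ` F) \<le> Sup ((\<lambda>b. e (ldiv a b)) ` insert b F)"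
    by (rule Sup_subset_mono) auto
  have "sup (e (ldiv a b)) (e (ldiv a d)) \<le> sup (Sup ((\<lambda>b. e (ldiv a b)) ` insert b F)) (e (ldiv a bot))"
    by (rule le_supI[OF order_trans[OF 3 sup_ge1] order_trans[OF 2 sup_mono[OF 4 order_refl]]])
  then show ?case using 1 by (rule order_trans[rotated])
qed


lemma ce_compact: "canonical_extension e \<Longrightarrow> Inf (e ` S) \<le> Sup (e ` T) \<Longrightarrow>
  \<exists>S' T'. finite S' \<and> S' \<subseteq> S \<and> finite T' \<and> T' \<subseteq> T \<and> Inf (e ` S') \<le> Sup (e ` T')"
  unfolding canonical_extension_def by blast

theorem corollary2p6:
  fixes ldiv rdiv :: "'a::{distrib_lattice,bounded_lattice} \<Rightarrow> 'a \<Rightarrow> 'a"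
    and e :: "'a \<Rightarrow> 'c::complete_lattice"
    and mult :: "'c \<Rightarrow> 'c \<Rightarrow> 'c"
  assumes ra: "residuation_algebra ldiv rdiv"
    and ce: "canonical_extension e"
    and mult_res: "\<And>u v w. (v \<le> ldiv_pi e ldiv u w \<longleftrightarrow> mult u v \<le> w)
                          \<and> (mult u v \<le> w \<longleftrightarrow> u \<le> rdiv_pi e rdiv w v)"
    and no_zero_div: "\<And>x y. compl_join_irred x \<Longrightarrow> compl_join_irred y \<Longrightarrow> mult x y \<noteq> bot"
    and distr: "\<And>a b c. ldiv a (sup b c) \<le> sup (ldiv a b) (ldiv a c)"
  shows "\<forall>y z. compl_join_irred y \<longrightarrow> compl_join_irred z \<longrightarrow> compl_join_irred (mult y z)"
proof (intro allI impI)
  fix y z :: 'c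
  assume y: "compl_join_irred y" and z: "compl_join_irred z"
  have ycl: "y \<in> closed_elems e" using cji_closed[OF ce y] .
  have ebot: "e bot = bot" using ce unfolding canonical_extension_def by blast
  have KO_anti: "\<And>k p. k \<le> y \<Longrightarrow> ldiv_KO e ldiv y p \<le> ldiv_KO e ldiv k p"
    unfolding ldiv_KO_def by (rule Sup_subset_mono) (auto intro: order_trans)
  have prime: "\<And>S. mult y z \<le> Sup S \<Longrightarrow> \<exists>s\<in>S. mult y z \<le> s"
  proof (rule ccontr)
    fix S assume mS: "mult y z \<le> Sup S" and ns: "\<not> (\<exists>s\<in>S. mult y z \<le> s)"
    have "\<forall>s\<in>S. \<exists>B. s \<le> Sup (e ` B) \<and> \<not> z \<le> ldiv_KO e ldiv y (Sup (e ` B))"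
    proof
      fix s assume "s \<in> S"
      then have "\<not> mult y z \<le> s" using ns by blast
      then have "\<not> z \<le> ldiv_pi e ldiv y s" using mult_res[of z y s] by blast
      then have "\<exists>r \<in> {ldiv_KO e ldiv k p | k p.
          k \<in> closed_elems e \<and> p \<in> open_elems e \<and> k \<le> y \<and> s \<le> p}. \<not> z \<le> r"
        unfolding ldiv_pi_def by (meson Inf_greatest)
      then obtain k p where kp: "k \<in> closed_elems e" "p \<in> open_elems e" "k \<le> y" "s \<le> p"
          "\<not> z \<le> ldiv_KO e ldiv k p"
        by blast
      obtain B where B: "p = Sup (e ` B)" using kp(2) unfolding open_elems_def by blast
      have "\<not> z \<le> ldiv_KO e ldiv y p" using kp KO_anti[OF kp(3)] by (meson order_trans)
      then show "\<exists>B. s \<le> Sup (e ` B) \<and> \<not> z \<le> ldiv_KO e ldiv y (Sup (e ` B))"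
        using B kp(4) by blast
    qed
    then obtain Bf where Bf0: "\<forall>s\<in>S. s \<le> Sup (e ` Bf s) \<and> \<not> z \<le> ldiv_KO e ldiv y (Sup (e ` Bf s))"
      by (rule bchoice[THEN exE])
    then have Bf: "\<And>s. s \<in> S \<Longrightarrow> s \<le> Sup (e ` Bf s)"
        "\<And>s. s \<in> S \<Longrightarrow> \<not> z \<le> ldiv_KO e ldiv y (Sup (e ` Bf s))"
      by blast+
    define U where "U = (\<Union>s\<in>S. Bf s)"
    define Ob where "Ob = Sup (e ` U)"
    have SOb: "Sup S \<le> Ob"
    proof (rule Sup_least)
      fix s assume "s \<in> S"
      have "Sup (e ` Bf s) \<le> Ob" unfolding Ob_def U_def
        by (rule Sup_subset_mono) (use \<open>s \<in> S\<close> in blast)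
      then show "s \<le> Ob" using Bf(1)[OF \<open>s \<in> S\<close>] by (rule order_trans[rotated])
    qed
    have Obo: "Ob \<in> open_elems e" unfolding Ob_def open_elems_def by blast
    have "z \<le> ldiv_pi e ldiv y (Sup S)" using mS mult_res[of z y "Sup S"] by blast
    also have "\<dots> \<le> ldiv_KO e ldiv y Ob" unfolding ldiv_pi_def
      by (rule Inf_lower) (use ycl Obo SOb in blast)
    also have "\<dots> = Sup (e ` {ldiv a b | a b. y \<le> e a \<and> e b \<le> Ob})"
      unfolding ldiv_KO_def by (rule arg_cong[where f=Sup]) blast
    finally have zT: "z \<le> Sup (e ` {ldiv a b | a b. y \<le> e a \<and> e b \<le> Ob})" .
    obtain t where "t \<in> {ldiv a b | a b. y \<le> e a \<and> e b \<le> Ob}" "z \<le> e t"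
      using prime_compact[OF ce z zT] by (elim bexE)
    then obtain a b where ab: "y \<le> e a" "e b \<le> Ob" "z \<le> e (ldiv a b)" by blast
    have ebU: "Inf (e ` {b}) \<le> Sup (e ` U)" using ab(2) unfolding Ob_def by simp
    obtain S' U' where SU: "finite S'" "S' \<subseteq> {b}" "finite U'" "U' \<subseteq> U" "Inf (e ` S') \<le> Sup (e ` U')"
      using ce_compact[OF ce ebU] by blast
    have "e b \<le> Inf (e ` S')" by (rule Inf_greatest) (use SU(2) in blast)
    then have "e b \<le> Sup (e ` U')" using SU(5) by (rule order_trans)
    then have "e (ldiv a b) \<le> sup (Sup ((\<lambda>b. e (ldiv a b)) ` U')) (e (ldiv a bot))"
      by (rule ldiv_fin[OF ce ra distr SU(3)])
    also have "\<dots> = Sup (e ` insert (ldiv a bot) (ldiv a ` U'))"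
      by (simp add: image_image sup_commute)
    finally have "z \<le> Sup (e ` insert (ldiv a bot) (ldiv a ` U'))" using ab(3) by (rule order_trans[rotated])
    then obtain t where t: "t \<in> insert (ldiv a bot) (ldiv a ` U')" "z \<le> e t"
      using prime_fin[OF ce z SU(3)[THEN finite_imageI[where h="ldiv a"], THEN finite.insertI]] by blast
    show False
    proof (cases "t = ldiv a bot")
      case True
      have "z \<le> ldiv_pi e ldiv y bot" unfolding ldiv_pi_def
      proof (rule Inf_greatest)
        fix r assume "r \<in> {ldiv_KO e ldiv k p |k p.
           k \<in> closed_elems e \<and> p \<in> open_elems e \<and> k \<le> y \<and> bot \<le> p}"
        then obtain k p where "r = ldiv_KO e ldiv k p" "k \<le> y" by blast
        moreover have "e (ldiv a bot) \<le> ldiv_KO e ldiv k p"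
        proof -
          have kea: "k \<le> e a" using \<open>k \<le> y\<close> ab(1) by (rule order_trans)
          have "e bot \<le> p" by (simp add: ebot)
          then show ?thesis unfolding ldiv_KO_def using kea by (intro Sup_upper) blast
        qed
        ultimately show "z \<le> r" using t True by (meson order_trans)
      qed
      then have "mult y z \<le> bot" using mult_res[of z y bot] by blast
      then show False using no_zero_div[OF y z] by (simp add: bot_unique)
    next
      case False
      then obtain b' where b': "b' \<in> U'" "t = ldiv a b'" using t by blast
      then obtain s where s: "s \<in> S" "b' \<in> Bf s" using SU(4) U_def by blast
      have "e (ldiv a b') \<le> ldiv_KO e ldiv y (Sup (e ` Bf s))"
      proof -
        have "e b' \<le> Sup (e ` Bf s)" using s(2) by (simp add: Sup_upper)
        then show ?thesis unfolding ldiv_KO_def using ab(1) by (intro Sup_upper) blast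
      qed
      then show False using Bf(2)[OF s(1)] t b' by (meson order_trans)
    qed
  qed
  show "compl_join_irred (mult y z)" unfolding compl_join_irred_def
  proof (intro allI impI)
    fix S assume m: "mult y z = Sup S"
    then obtain s where "s \<in> S" "mult y z \<le> s" using prime[of S] by auto
    moreover have "s \<le> mult y z" using m \<open>s \<in> S\<close> by (simp add: Sup_upper)
    ultimately show "mult y z \<in> S" by (metis antisym)
  qed
qed

end
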